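(* Let $T_+$, $T_-$, $T_0$ be ordered (classical or virtual) tangle diagrams which coincide, including the orderings of their endpoints, outside a small disk, inside which $T_+$ consists of a positive crossing of two oriented arcs, $T_-$ of a negative crossing of the same two oriented arcs, and $T_0$ of the orientation-respecting smoothing of that crossing. Then $$\nabla(T_+)-\nabla(T_-)=z\,\nabla(T_0).$$
   Context: An $n$-tangle ($n\ge 1$) is a collection of $n$ disjoint oriented intervals ("strings") and finitely many oriented circles ("closed components") properly embedded in the 3-ball with string endpoints at $2n$ prescribed boundary points, represented by diagrams; virtual diagrams may also contain virtual crossings. For a string, its source is its input and its target its output. A tangle with $n$ strings is ordered if its $2n$ endpoints are numbered by integers $j_1<\dots<j_{2n}$ (up to monotone relabeling) so that every input receives some $j_{2k-1}$ and every output some $j_{2k}$; the ordering is coherent if for each $k$ the string with input $j_{2k-1}$ has output $j_{2k}$. For an ordered tangle diagram $D$: a state $S$ is a set of classical crossings; $D(S)$ is obtained by smoothing each crossing of $S$ respecting orientations and inherits the endpoint numbering. $S$ is coherent if $D(S)$ has no closed components and its ordering is coherent. For coherent $S$, traverse $D(S)$ along the string from $j_1$ to $j_2$, then the string from $j_3$ to $j_4$, etc.; the neighborhood of each smoothed crossing is passed twice, and $S$ is descending if for each crossing of $S$ its neighborhood is first entered along the former overpass. $\operatorname{sign}(S)$ is the product of local writhes of the crossings of $S$. Define $c_n(D)=\sum\operatorname{sign}(S)$ over descending states with $n$ crossings and $\nabla(D)=\sum_{n\ge0}c_n(D)z^n\in\mathbb Z[z]$; this is an invariant of ordered tangles. 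*)

theory Defs
  imports "HOL-Computational_Algebra.Polynomial"
begin

text \<open>Combinatorial (Gauss-diagram) model of ordered (virtual) tangle diagrams.
If \<open>c\<close> is a classical crossing, \<open>Pass c True\<close> is its over-passage and
\<open>Pass c False\<close> its under-passage; internal points with \<open>c\<close> not a crossing
are plain subdivision points (needed e.g. to represent crossingless circles).
Endpoints are numbered 0..2n-1 (normalised up to monotone relabelling): inputs carry
the even labels 2k and outputs the odd labels 2k+1.  The map \<open>nxt\<close> sends every
input or internal point to the next node along the oriented diagram.  Virtual
crossings are invisible in this model.\<close>

datatype node = In nat | Out nat | Pass nat bool

record tangle =
  nstr :: nat
  verts :: "node set"
  cr :: "nat set"
  sgn :: "nat \<Rightarrow> int"
  nxt :: "node \<Rightarrow> node"

definition inputs :: "tangle \<Rightarrow> node set" where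
  "inputs D = {In (2*k) | k. k < nstr D}"

definition outputs :: "tangle \<Rightarrow> node set" where
  "outputs D = {Out (2*k+1) | k. k < nstr D}"

definition wf_tangle :: "tangle \<Rightarrow> bool" where
  "wf_tangle D \<longleftrightarrow> nstr D \<ge> 1 \<and> finite (verts D) \<and> finite (cr D)
     \<and> (\<forall>v\<in>verts D. \<exists>c b. v = Pass c b)
     \<and> (\<forall>c\<in>cr D. Pass c True \<in> verts D \<and> Pass c False \<in> verts D)
     \<and> (\<forall>c\<in>cr D. sgn D c = 1 \<or> sgn D c = -1)
     \<and> bij_betw (nxt D) (inputs D \<union> verts D) (verts D \<union> outputs D)"

fun swp :: "nat set \<Rightarrow> node \<Rightarrow> node" where
  "swp S (Pass c b) = (if c \<in> S then Pass c (\<not> b) else Pass c b)"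
| "swp S x = x"

text \<open>Successor map of the smoothed diagram \<open>D(S)\<close> (orientation-respecting smoothing:
the incoming over-strand continues along the outgoing under-strand and vice versa).
The neighbourhood of a smoothed crossing \<open>c\<close> is passed at node \<open>Pass c True\<close> when it
is entered along the former overpass, and at \<open>Pass c False\<close> otherwise.\<close>
definition snxt :: "tangle \<Rightarrow> nat set \<Rightarrow> node \<Rightarrow> node" where
  "snxt D S = nxt D \<circ> swp S"

definition steps :: "tangle \<Rightarrow> nat set \<Rightarrow> nat \<Rightarrow> nat \<Rightarrow> node" where
  "steps D S k i = (snxt D S ^^ i) (In (2*k))"

definition on_string :: "tangle \<Rightarrow> nat set \<Rightarrow> nat \<Rightarrow> nat \<Rightarrow> bool" where
  "on_string D S k i \<longleftrightarrow> k < nstr D \<and> (\<forall>j\<le>i. steps D S k j \<notin> outputs D)"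

definition coherent_state :: "tangle \<Rightarrow> nat set \<Rightarrow> bool" where
  "coherent_state D S \<longleftrightarrow> S \<subseteq> cr D
     \<and> (\<forall>k < nstr D. \<exists>m. steps D S k m = Out (2*k+1))
     \<and> (\<forall>v\<in>verts D. \<exists>k i. on_string D S k i \<and> steps D S k i = v)"

definition descending_state :: "tangle \<Rightarrow> nat set \<Rightarrow> bool" where
  "descending_state D S \<longleftrightarrow> coherent_state D S \<and>
     (\<forall>c\<in>S. \<exists>k1 i1 k2 i2.
        on_string D S k1 i1 \<and> steps D S k1 i1 = Pass c True \<and>
        on_string D S k2 i2 \<and> steps D S k2 i2 = Pass c False \<and>
        (k1 < k2 \<or> (k1 = k2 \<and> i1 < i2)))"

definition cn :: "tangle \<Rightarrow> nat \<Rightarrow> int" where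
  "cn D n = (\<Sum>S \<in> {S. S \<subseteq> cr D \<and> card S = n \<and> descending_state D S}. \<Prod>c\<in>S. sgn D c)"

definition nabla :: "tangle \<Rightarrow> int poly" where
  "nabla D = (\<Sum>n \<le> card (cr D). monom (cn D n) n)"

text \<open>Crossing change at \<open>c\<close>: the two passages are exchanged (the arc that went over
now goes under) and the local writhe changes sign; all else unchanged.\<close>
definition crossing_change :: "tangle \<Rightarrow> nat \<Rightarrow> tangle" where
  "crossing_change D c = D\<lparr> sgn := (sgn D)(c := - sgn D c),
                            nxt := swp {c} \<circ> nxt D \<circ> swp {c} \<rparr>"

text \<open>Oriented smoothing at \<open>c\<close>: \<open>c\<close> stops being a crossing (its two passages become
plain points) and the strands are reconnected.\<close>
definition smoothing :: "tangle \<Rightarrow> nat \<Rightarrow> tangle" where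
  "smoothing D c = D\<lparr> cr := cr D - {c}, nxt := nxt D \<circ> swp {c} \<rparr>"

end

theory Submission
  imports Defs
begin

lemma swp_invol[simp]: "swp A (swp A x) = x"
  by (cases x) auto

lemma swp_comm: "swp A (swp B x) = swp B (swp A x)"
  by (cases x) auto

lemma swp_ins: "c \<notin> S \<Longrightarrow> swp {c} (swp S x) = swp (insert c S) x"
  by (cases x) auto

lemma swp_out_iff: "swp S x \<in> outputs D \<longleftrightarrow> x \<in> outputs D"
  by (cases x) (auto simp: outputs_def)

lemma swp_Pass_other: "d \<noteq> c \<Longrightarrow> swp {c} x = Pass d b \<longleftrightarrow> x = Pass d b"
  by (cases x) auto

lemma swp_Pass_same: "swp {c} x = Pass c b \<longleftrightarrow> x = Pass c (\<not> b)"
  by (cases x) auto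

lemma swp_Out: "swp S x = Out n \<longleftrightarrow> x = Out n"
  by (cases x) auto

lemma cc_simps[simp]: "nstr (crossing_change D c) = nstr D" "verts (crossing_change D c) = verts D"
  "cr (crossing_change D c) = cr D" "outputs (crossing_change D c) = outputs D"
  "inputs (crossing_change D c) = inputs D"
  by (auto simp: crossing_change_def outputs_def inputs_def)

lemma sm_simps[simp]: "nstr (smoothing D c) = nstr D" "verts (smoothing D c) = verts D"
  "cr (smoothing D c) = cr D - {c}" "outputs (smoothing D c) = outputs D"
  "inputs (smoothing D c) = inputs D" "sgn (smoothing D c) = sgn D"
  by (auto simp: smoothing_def outputs_def inputs_def)

lemma steps_0: "steps D S k 0 = In (2*k)"
  by (simp add: steps_def)

lemma steps_Suc: "steps D S k (Suc i) = nxt D (swp S (steps D S k i))"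
  by (simp add: steps_def snxt_def)

lemma steps_cc: "steps (crossing_change D c) S k i = swp {c} (steps D S k i)"
proof (induction i)
  case 0 then show ?case by (simp add: steps_0)
next
  case (Suc i)
  show ?case unfolding steps_Suc Suc
    by (simp add: crossing_change_def swp_comm[of "{c}" S])
qed

lemma on_string_cc: "on_string (crossing_change D c) S k i = on_string D S k i"
  by (simp add: on_string_def steps_cc swp_out_iff)

lemma steps_sm: assumes cS: "c \<notin> S" shows "steps (smoothing D c) S k i = steps D (insert c S) k i"
proof (induction i)
  case 0 then show ?case by (simp add: steps_0)
next
  case (Suc i)
  show ?case unfolding steps_Suc Suc
    by (simp add: smoothing_def swp_comm[of S "{c}"] swp_ins[OF cS])
qed

lemma on_string_sm: "c \<notin> S \<Longrightarrow> on_string (smoothing D c) S k i = on_string D (insert c S) k i"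
  by (simp add: on_string_def steps_sm)

definition descAt :: "tangle \<Rightarrow> nat set \<Rightarrow> nat \<Rightarrow> bool \<Rightarrow> bool" where
  "descAt D S d b \<longleftrightarrow> (\<exists>k1 i1 k2 i2.
        on_string D S k1 i1 \<and> steps D S k1 i1 = Pass d b \<and>
        on_string D S k2 i2 \<and> steps D S k2 i2 = Pass d (\<not> b) \<and>
        (k1 < k2 \<or> (k1 = k2 \<and> i1 < i2)))"

lemma desc_iff: "descending_state D S \<longleftrightarrow> coherent_state D S \<and> (\<forall>d\<in>S. descAt D S d True)"
  by (simp add: descending_state_def descAt_def)

lemma descAt_cc_other: "d \<noteq> c \<Longrightarrow> descAt (crossing_change D c) S d b = descAt D S d b"
  by (simp add: descAt_def on_string_cc steps_cc swp_Pass_other)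

lemma descAt_cc_same: "descAt (crossing_change D c) S c b = descAt D S c (\<not> b)"
  by (simp add: descAt_def on_string_cc steps_cc swp_Pass_same)

lemma descAt_sm: "c \<notin> S \<Longrightarrow> descAt (smoothing D c) S d b = descAt D (insert c S) d b"
  by (simp add: descAt_def on_string_sm steps_sm)

lemma on_string_prev: "on_string D S k (Suc i) \<Longrightarrow> on_string D S k i"
  by (simp add: on_string_def)

lemma In_notin_verts: "wf_tangle D \<Longrightarrow> In n \<notin> verts D"
  unfolding wf_tangle_def by auto

lemma swp_pres:
  assumes wf: "wf_tangle D" and S: "S \<subseteq> cr D" and x: "x \<in> inputs D \<union> verts D"
  shows "swp S x \<in> inputs D \<union> verts D"
proof (cases x)
  case (Pass d b)
  show ?thesis
  proof (cases "d \<in> S")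
    case True
    then have "d \<in> cr D" using S by auto
    then have "Pass d True \<in> verts D" "Pass d False \<in> verts D" using wf unfolding wf_tangle_def by auto
    then show ?thesis using Pass True by (cases b) auto
  qed (use Pass x in auto)
qed (use x in auto)

lemma nxt_mem:
  assumes wf: "wf_tangle D" and x: "x \<in> inputs D \<union> verts D"
  shows "nxt D x \<in> verts D \<union> outputs D"
  using wf x unfolding wf_tangle_def bij_betw_def by auto

lemma nxt_inj:
  assumes wf: "wf_tangle D" and "x \<in> inputs D \<union> verts D" "y \<in> inputs D \<union> verts D"
    and "nxt D x = nxt D y"
  shows "x = y"
  using assms unfolding wf_tangle_def bij_betw_def inj_on_def by blast

lemma steps_mem:
  assumes wf: "wf_tangle D" and S: "S \<subseteq> cr D"
  shows "on_string D S k i \<Longrightarrow> steps D S k i \<in> inputs D \<union> verts D"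
proof (induction i)
  case 0
  then show ?case by (auto simp: steps_0 inputs_def on_string_def)
next
  case (Suc i)
  have "steps D S k i \<in> inputs D \<union> verts D" using Suc on_string_prev by blast
  then have "steps D S k (Suc i) \<in> verts D \<union> outputs D"
    unfolding steps_Suc using nxt_mem[OF wf] swp_pres[OF wf S] by blast
  moreover have "steps D S k (Suc i) \<notin> outputs D" using Suc.prems by (auto simp: on_string_def)
  ultimately show ?case by blast
qed

lemma steps_Suc_notIn:
  assumes wf: "wf_tangle D" and S: "S \<subseteq> cr D" and on: "on_string D S k i"
  shows "steps D S k (Suc i) \<noteq> In n"
proof -
  have "steps D S k (Suc i) \<in> verts D \<union> outputs D"
    unfolding steps_Suc using nxt_mem[OF wf] swp_pres[OF wf S] steps_mem[OF wf S on] by blast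
  then show ?thesis using In_notin_verts[OF wf] by (auto simp: outputs_def)
qed

lemma pos_unique:
  assumes wf: "wf_tangle D" and S: "S \<subseteq> cr D"
  shows "on_string D S k i \<Longrightarrow> on_string D S k' i' \<Longrightarrow> steps D S k i = steps D S k' i'
     \<Longrightarrow> k = k' \<and> i = i'"
proof (induction i arbitrary: i')
  case 0
  then show ?case
  proof (cases i')
    case (Suc j)
    then show ?thesis using 0 steps_Suc_notIn[OF wf S, of k' j] on_string_prev
      by (metis steps_0)
  qed (simp add: steps_0)
next
  case (Suc i)
  then show ?case
  proof (cases i')
    case 0
    then show ?thesis using Suc steps_Suc_notIn[OF wf S, of k i] on_string_prev
      by (metis steps_0)
  next
    case (Suc j)
    have a: "steps D S k i \<in> inputs D \<union> verts D" using steps_mem[OF wf S] on_string_prev Suc.prems by blast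
    have b: "steps D S k' j \<in> inputs D \<union> verts D" using steps_mem[OF wf S] on_string_prev Suc.prems Suc by blast
    have "swp S (steps D S k i) = swp S (steps D S k' j)"
      using nxt_inj[OF wf swp_pres[OF wf S a] swp_pres[OF wf S b]] Suc.prems Suc by (simp add: steps_Suc)
    then have "steps D S k i = steps D S k' j" by (metis swp_invol)
    then show ?thesis using Suc.IH[of j] Suc.prems Suc on_string_prev by blast
  qed
qed

lemma descAt_excl:
  assumes wf: "wf_tangle D" and coh: "coherent_state D S" and c: "c \<in> cr D"
  shows "descAt D S c False \<longleftrightarrow> \<not> descAt D S c True"
proof -
  have S: "S \<subseteq> cr D" using coh by (simp add: coherent_state_def)
  have vT: "Pass c True \<in> verts D" and vF: "Pass c False \<in> verts D"
    using wf c unfolding wf_tangle_def by auto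
  obtain kT iT where T: "on_string D S kT iT" "steps D S kT iT = Pass c True"
    using coh vT unfolding coherent_state_def by blast
  obtain kF iF where F: "on_string D S kF iF" "steps D S kF iF = Pass c False"
    using coh vF unfolding coherent_state_def by blast
  have uT: "\<And>k i. on_string D S k i \<Longrightarrow> steps D S k i = Pass c True \<Longrightarrow> k = kT \<and> i = iT"
    using pos_unique[OF wf S] T by metis
  have uF: "\<And>k i. on_string D S k i \<Longrightarrow> steps D S k i = Pass c False \<Longrightarrow> k = kF \<and> i = iF"
    using pos_unique[OF wf S] F by metis
  have ne: "\<not> (kT = kF \<and> iT = iF)" using T F by auto
  have dT: "descAt D S c True \<longleftrightarrow> (kT < kF \<or> (kT = kF \<and> iT < iF))"
  proof
    assume "descAt D S c True"
    then obtain k1 i1 k2 i2 where h: "on_string D S k1 i1" "steps D S k1 i1 = Pass c True"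
        "on_string D S k2 i2" "steps D S k2 i2 = Pass c (\<not> True)" "k1 < k2 \<or> (k1 = k2 \<and> i1 < i2)"
      unfolding descAt_def by blast
    from uT[OF h(1,2)] uF[OF h(3)] h(4,5) show "kT < kF \<or> (kT = kF \<and> iT < iF)" by simp
  next
    assume "kT < kF \<or> (kT = kF \<and> iT < iF)"
    then show "descAt D S c True" unfolding descAt_def using T F by (intro exI[of _ kT] exI[of _ iT] exI[of _ kF] exI[of _ iF]) simp
  qed
  have dF: "descAt D S c False \<longleftrightarrow> (kF < kT \<or> (kF = kT \<and> iF < iT))"
  proof
    assume "descAt D S c False"
    then obtain k1 i1 k2 i2 where h: "on_string D S k1 i1" "steps D S k1 i1 = Pass c False"
        "on_string D S k2 i2" "steps D S k2 i2 = Pass c (\<not> False)" "k1 < k2 \<or> (k1 = k2 \<and> i1 < i2)"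
      unfolding descAt_def by blast
    from uF[OF h(1,2)] uT[OF h(3)] h(4,5) show "kF < kT \<or> (kF = kT \<and> iF < iT)" by simp
  next
    assume "kF < kT \<or> (kF = kT \<and> iF < iT)"
    then show "descAt D S c False" unfolding descAt_def using T F by (intro exI[of _ kF] exI[of _ iF] exI[of _ kT] exI[of _ iT]) simp
  qed
  show ?thesis using dT dF ne by auto
qed

lemma coherent_cc:
  assumes wf: "wf_tangle D" and c: "c \<in> cr D"
  shows "coherent_state (crossing_change D c) S \<longleftrightarrow> coherent_state D S"
proof -
  have vs: "swp {c} v \<in> verts D" if v: "v \<in> verts D" for v
  proof -
    have "swp {c} v \<in> inputs D \<union> verts D" using swp_pres[OF wf, of "{c}" v] c v by auto
    moreover have "swp {c} v \<notin> inputs D" using v In_notin_verts[OF wf] by (cases v) (auto simp: inputs_def)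
    ultimately show ?thesis by blast
  qed
  have cov: "(\<forall>v\<in>verts D. \<exists>k i. on_string D S k i \<and> swp {c} (steps D S k i) = v) \<longleftrightarrow>
        (\<forall>v\<in>verts D. \<exists>k i. on_string D S k i \<and> steps D S k i = v)"
  proof
    assume h: "\<forall>v\<in>verts D. \<exists>k i. on_string D S k i \<and> swp {c} (steps D S k i) = v"
    show "\<forall>v\<in>verts D. \<exists>k i. on_string D S k i \<and> steps D S k i = v"
    proof
      fix v assume "v \<in> verts D"
      then obtain k i where "on_string D S k i" "swp {c} (steps D S k i) = swp {c} v" using h vs by blast
      then show "\<exists>k i. on_string D S k i \<and> steps D S k i = v" by (metis swp_invol)
    qed
  next
    assume h: "\<forall>v\<in>verts D. \<exists>k i. on_string D S k i \<and> steps D S k i = v"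
    show "\<forall>v\<in>verts D. \<exists>k i. on_string D S k i \<and> swp {c} (steps D S k i) = v"
    proof
      fix v assume "v \<in> verts D"
      then obtain k i where "on_string D S k i" "steps D S k i = swp {c} v" using h vs by blast
      then show "\<exists>k i. on_string D S k i \<and> swp {c} (steps D S k i) = v"
        by (intro exI[of _ k] exI[of _ i]) simp
    qed
  qed
  show ?thesis unfolding coherent_state_def cc_simps on_string_cc steps_cc swp_Out cov ..
qed

lemma coherent_sm:
  assumes c: "c \<in> cr D" and cS: "c \<notin> S"
  shows "coherent_state (smoothing D c) S \<longleftrightarrow> S \<subseteq> cr D \<and> coherent_state D (insert c S)"
  unfolding coherent_state_def sm_simps on_string_sm[OF cS] steps_sm[OF cS] using c cS by auto

lemma sgn_cc: "sgn (crossing_change D c) = (sgn D)(c := - sgn D c)"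
  by (simp add: crossing_change_def)

lemma cn_pow: "finite (cr D) \<Longrightarrow>
  cn D n = (\<Sum>S\<in>Pow (cr D). if card S = n \<and> descending_state D S then prod (sgn D) S else 0)"
proof -
  assume f: "finite (cr D)"
  have "{S. S \<subseteq> cr D \<and> card S = n \<and> descending_state D S} = {S\<in>Pow (cr D). card S = n \<and> descending_state D S}"
    by auto
  then show ?thesis unfolding cn_def using sum.inter_filter[of "Pow (cr D)"] f by simp
qed

lemma pointwise:
  assumes wf: "wf_tangle D" and c: "c \<in> cr D" and s1: "sgn D c = 1" and S: "S \<subseteq> cr D"
  shows "(if card S = n \<and> descending_state D S then prod (sgn D) S else 0)
       - (if card S = n \<and> descending_state (crossing_change D c) S then prod (sgn (crossing_change D c)) S else 0)
       = (if c \<in> S \<and> card S = n \<and> coherent_state D S \<and> (\<forall>d\<in>S-{c}. descAt D S d True)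
          then prod (sgn D) (S-{c}) else 0)"
proof -
  have fS: "finite S" using S wf unfolding wf_tangle_def using finite_subset by blast
  have coh: "coherent_state (crossing_change D c) S = coherent_state D S" using coherent_cc[OF wf c] .
  show ?thesis
  proof (cases "c \<in> S")
    case False
    have p: "prod (sgn (crossing_change D c)) S = prod (sgn D) S"
      unfolding sgn_cc using False by (intro prod.cong) auto
    have d: "descending_state (crossing_change D c) S = descending_state D S"
    proof -
      have "(\<forall>d\<in>S. descAt (crossing_change D c) S d True) = (\<forall>d\<in>S. descAt D S d True)"
        using False by (intro ball_cong refl descAt_cc_other) auto
      then show ?thesis unfolding desc_iff coh by simp
    qed
    show ?thesis using False p d by simp
  next
    case True
    have p1: "prod (sgn D) S = prod (sgn D) (S-{c})"
      using prod.remove[OF fS True, of "sgn D"] s1 by simp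
    have p2: "prod (sgn (crossing_change D c)) S = - prod (sgn D) (S-{c})"
    proof -
      have "prod (sgn (crossing_change D c)) S = sgn (crossing_change D c) c * prod (sgn (crossing_change D c)) (S-{c})"
        using prod.remove[OF fS True] by blast
      moreover have "prod (sgn (crossing_change D c)) (S-{c}) = prod (sgn D) (S-{c})"
        unfolding sgn_cc by (intro prod.cong) auto
      ultimately show ?thesis using s1 by (simp add: sgn_cc)
    qed
    have sp: "(\<forall>d\<in>S. P d) \<longleftrightarrow> (\<forall>d\<in>S-{c}. P d) \<and> P c" for P using True by blast
    have d1: "descending_state D S \<longleftrightarrow> coherent_state D S \<and> (\<forall>d\<in>S-{c}. descAt D S d True) \<and> descAt D S c True"
      unfolding desc_iff sp by blast
    have d2: "descending_state (crossing_change D c) S \<longleftrightarrow> coherent_state D S \<and> (\<forall>d\<in>S-{c}. descAt D S d True) \<and> descAt D S c False"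
    proof -
      have "(\<forall>d\<in>S-{c}. descAt (crossing_change D c) S d True) = (\<forall>d\<in>S-{c}. descAt D S d True)"
        by (intro ball_cong refl descAt_cc_other) auto
      then show ?thesis unfolding desc_iff sp coh descAt_cc_same by simp
    qed
    show ?thesis
    proof (cases "coherent_state D S")
      case True
      show ?thesis unfolding d1 d2 descAt_excl[OF wf True c] p1 p2 using True \<open>c \<in> S\<close>
        by (cases "descAt D S c True") simp_all
    next
      case False
      show ?thesis unfolding d1 d2 using False by simp
    qed
  qed
qed

lemma desc_sm:
  assumes c: "c \<in> cr D" and S: "S \<subseteq> cr D - {c}"
  shows "descending_state (smoothing D c) S \<longleftrightarrow>
     coherent_state D (insert c S) \<and> (\<forall>d\<in>(insert c S)-{c}. descAt D (insert c S) d True)"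
proof -
  have cS: "c \<notin> S" using S by auto
  have e: "insert c S - {c} = S" using cS by auto
  show ?thesis unfolding desc_iff coherent_sm[OF c cS] descAt_sm[OF cS] e using S by auto
qed

lemma diff_cn:
  assumes wf: "wf_tangle D" and c: "c \<in> cr D" and s1: "sgn D c = 1"
  shows "cn D n - cn (crossing_change D c) n = (if n = 0 then 0 else cn (smoothing D c) (n - 1))"
proof -
  let ?M = "crossing_change D c" and ?Z = "smoothing D c"
  have fin: "finite (cr D)" using wf unfolding wf_tangle_def by blast
  define R where "R S \<longleftrightarrow> coherent_state D S \<and> (\<forall>d\<in>S-{c}. descAt D S d True)" for S
  define h where "h S = (if c \<in> S \<and> card S = n \<and> R S then prod (sgn D) (S-{c}) else 0)" for S
  have "cn D n - cn ?M n = (\<Sum>S\<in>Pow (cr D). h S)"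
    unfolding cn_pow[OF fin] cn_pow[of ?M, simplified, OF fin] sum_subtractf[symmetric] h_def R_def
    using pointwise[OF wf c s1] by (intro sum.cong) auto
  also have "\<dots> = (\<Sum>S\<in>insert c ` Pow (cr D - {c}). h S)"
  proof (rule sum.mono_neutral_right)
    show "finite (Pow (cr D))" using fin by simp
    show "insert c ` Pow (cr D - {c}) \<subseteq> Pow (cr D)" using c by auto
    show "\<forall>i\<in>Pow (cr D) - insert c ` Pow (cr D - {c}). h i = 0"
    proof
      fix S assume S: "S \<in> Pow (cr D) - insert c ` Pow (cr D - {c})"
      have "c \<notin> S"
      proof
        assume "c \<in> S"
        then have "S = insert c (S - {c})" by auto
        moreover have "S - {c} \<in> Pow (cr D - {c})" using S by auto
        ultimately show False using S by blast
      qed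
      then show "h S = 0" by (simp add: h_def)
    qed
  qed
  also have "\<dots> = (\<Sum>S\<in>Pow (cr D - {c}). h (insert c S))"
    by (rule sum.reindex_cong[where l = "insert c"]) (auto simp: inj_on_def)
  also have "\<dots> = (if n = 0 then 0 else cn ?Z (n - 1))"
  proof -
    have fin2: "finite (cr D - {c})" using fin by simp
    have eq: "h (insert c S) = (if card S = n - 1 \<and> n \<noteq> 0 \<and> descending_state ?Z S then prod (sgn ?Z) S else 0)"
      if S: "S \<in> Pow (cr D - {c})" for S
    proof -
      have cS: "c \<notin> S" using S by auto
      have fS: "finite S" using S fin2 finite_subset by auto
      have e: "insert c S - {c} = S" using cS by auto
      have cd: "card (insert c S) = Suc (card S)" using cS fS by simp
      show ?thesis unfolding h_def e cd R_def desc_sm[OF c, of S, simplified, OF S[simplified]]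
        using S by auto
    qed
    have "(\<Sum>S\<in>Pow (cr D - {c}). h (insert c S)) = (\<Sum>S\<in>Pow (cr D - {c}).
        (if card S = n - 1 \<and> n \<noteq> 0 \<and> descending_state ?Z S then prod (sgn ?Z) S else 0))"
      by (rule sum.cong[OF refl]) (rule eq)
    also have "\<dots> = (if n = 0 then 0 else cn ?Z (n - 1))"
    proof (cases "n = 0")
      case True then show ?thesis by simp
    next
      case False
      then show ?thesis unfolding cn_pow[of ?Z, simplified, OF fin] by simp
    qed
    finally show ?thesis .
  qed
  finally show ?thesis .
qed

theorem mainTheorem3:
  fixes Tp :: tangle and c :: nat
  assumes "wf_tangle Tp" and "c \<in> cr Tp" and "sgn Tp c = 1"
  shows "nabla Tp - nabla (crossing_change Tp c) = [:0, 1:] * nabla (smoothing Tp c)"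
proof -
  let ?M = "crossing_change Tp c" and ?Z = "smoothing Tp c"
  have fin: "finite (cr Tp)" using assms(1) unfolding wf_tangle_def by blast
  obtain N where N: "card (cr Tp) = Suc N" using assms(2) fin by (metis card_Suc_Diff1)
  have NZ: "card (cr ?Z) = N" using N assms(2) fin by simp
  have "nabla Tp - nabla ?M = (\<Sum>n\<le>Suc N. monom (cn Tp n - cn ?M n) n)"
    unfolding nabla_def cc_simps N sum_subtractf[symmetric] by (simp add: diff_monom)
  also have "\<dots> = (\<Sum>n\<le>Suc N. monom (if n = 0 then 0 else cn ?Z (n - 1)) n)"
    using diff_cn[OF assms] by simp
  also have "\<dots> = (\<Sum>n\<le>N. monom (cn ?Z n) (Suc n))"
    by (subst sum.atMost_Suc_shift) simp
  also have "\<dots> = [:0, 1:] * nabla ?Z"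
    unfolding nabla_def NZ by (simp add: sum_distrib_left monom_Suc)
  finally show ?thesis .
qed

end
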